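(* Let $c>0$, let $\nu,\tilde\nu$ be probability measures on $\mathbb R_+$ different from $\boldsymbol d_0$, and for $z\in\mathbb C_+$ let $(\delta(z),\tilde\delta(z))\in\mathbb C_+^2$ be the unique solution of $\delta = c\int \frac{t}{-z(1+\tilde\delta t)}\nu(dt)$, $\tilde\delta=\int\frac{t}{-z(1+\delta t)}\tilde\nu(dt)$. Then $|\delta(z)|$ and $|\tilde\delta(z)|$ are bounded on every bounded region $\mathcal R\subset\mathbb C_+$ lying at positive distance from the imaginary axis (i.e. with $\inf_{z\in\mathcal R}|\Re z|>0$).
   Context: $\mathbb C_+=\{z:\Im z>0\}$, $\boldsymbol d_0$ is the Dirac mass at $0$; existence and uniqueness of the solution of the system in $\mathbb C_+^2$ is known. *)

theory Defs
  imports "HOL-Probability.Probability"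
begin

definition prob_on_Rplus :: "real measure \<Rightarrow> bool" where
  "prob_on_Rplus \<nu> \<longleftrightarrow> prob_space \<nu> \<and> sets \<nu> = sets borel \<and> (AE t in \<nu>. 0 \<le> t)"

end

theory Submission
  imports Defs
begin

lemma norm_ge_Im_t:
  fixes q :: complex and t :: real
  assumes "Im q > 0" "t \<ge> 0"
  shows "cmod (1 + q * of_real t) \<ge> Im q * t"
proof -
  have "Im (1 + q * of_real t) = Im q * t" by simp
  moreover have "\<bar>Im (1 + q * of_real t)\<bar> \<le> cmod (1 + q * of_real t)" by (rule abs_Im_le_cmod)
  ultimately show ?thesis using assms by simp
qed

lemma norm_ge_1_minus:
  fixes q :: complex and t :: real
  assumes "t \<ge> 0"
  shows "cmod (1 + q * of_real t) \<ge> 1 - cmod q * t"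
proof -
  have "cmod (q * of_real t) = cmod q * t" using assms by (simp add: norm_mult)
  moreover have "cmod (1::complex) \<le> cmod (1 + q * of_real t) + cmod (q * of_real t)"
    by (metis add_diff_cancel_left' norm_triangle_ineq4 add.commute diff_add_cancel norm_minus_commute norm_triangle_ineq2)
  ultimately show ?thesis by simp
qed

lemma norm_ge_minus_1:
  fixes q :: complex and t :: real
  assumes "t \<ge> 0"
  shows "cmod (1 + q * of_real t) \<ge> cmod q * t - 1"
proof -
  have "cmod (q * of_real t) = cmod q * t" using assms by (simp add: norm_mult)
  moreover have "cmod (q * of_real t) \<le> cmod (1 + q * of_real t) + cmod (1::complex)"
    by (metis add_diff_cancel_left' norm_triangle_ineq4 add.commute)
  ultimately show ?thesis by simp
qed

lemma den_nz:
  fixes q :: complex and t :: real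
  assumes "Im q > 0" "t \<ge> 0"
  shows "1 + q * of_real t \<noteq> 0"
proof
  assume "1 + q * of_real t = 0"
  then have "Re (1 + q * of_real t) = 0" by simp
  hence "1 + Re q * t = 0" by simp
  moreover have "Im (1 + q * of_real t) = Im q * t" by simp
  hence "Im q * t = 0" using \<open>1 + q * of_real t = 0\<close> by simp
  ultimately show False using assms by auto
qed

lemma Im_f:
  fixes q :: complex and t :: real
  assumes "Im q > 0" "t \<ge> 0"
  shows "Im (of_real t / (1 + q * of_real t)) = - Im q * (cmod (of_real t / (1 + q * of_real t)))\<^sup>2"
proof -
  define w where "w = 1 + q * of_real t"
  have nz: "w \<noteq> 0" using den_nz assms unfolding w_def .
  define D where "D = (Re w)\<^sup>2 + (Im w)\<^sup>2"
  have D: "(cmod w)\<^sup>2 = D" unfolding D_def by (simp add: cmod_power2)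
  have Dp: "D > 0" using nz unfolding D_def
    by (metis complex_eq_iff sum_power2_gt_zero_iff zero_complex.simps(1,2))
  have Imw: "Im w = Im q * t" unfolding w_def by simp
  have a: "Im (of_real t / w) = - (Im q * t\<^sup>2) / D"
    unfolding D_def using Imw by (simp add: Im_divide power2_eq_square)
  have b: "(cmod (of_real t / w))\<^sup>2 = t\<^sup>2 / D"
    using D by (simp add: norm_divide power_divide)
  show ?thesis unfolding w_def[symmetric] a b by simp
qed

lemma Im_qf:
  fixes q :: complex and t :: real
  assumes "Im q > 0" "t \<ge> 0"
  shows "Im (q * (of_real t / (1 + q * of_real t))) = Im q * t / (cmod (1 + q * of_real t))\<^sup>2"
proof -
  define w where "w = 1 + q * of_real t"
  have nz: "w \<noteq> 0" using den_nz assms unfolding w_def .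
  define D where "D = (Re w)\<^sup>2 + (Im w)\<^sup>2"
  have D: "(cmod w)\<^sup>2 = D" unfolding D_def by (simp add: cmod_power2)
  have "q * of_real t = w - 1" unfolding w_def by simp
  have "q * (of_real t / w) = (q * of_real t) / w" by simp
  also have "\<dots> = (w - 1) / w" using \<open>q * of_real t = w - 1\<close> by simp
  finally have eqq: "q * (of_real t / w) = (w - 1) / w" .
  have "Im (q * (of_real t / w)) = Im ((w-1)/w)" by (simp only: eqq)
  also have "\<dots> = - Im (1 / w)" using nz by (simp add: diff_divide_distrib)
  also have "\<dots> = Im w / D" unfolding D_def by (simp add: Im_divide)
  also have "Im w = Im q * t" unfolding w_def by simp
  finally show ?thesis unfolding w_def[symmetric] D .
qed


lemma pR:
  assumes "prob_on_Rplus M"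
  shows "prob_space M" "sets M = sets borel" "AE t in M. 0 \<le> t" "space M = UNIV"
proof -
  show ps: "prob_space M" using assms unfolding prob_on_Rplus_def by simp
  show ss: "sets M = sets borel" using assms unfolding prob_on_Rplus_def by simp
  show "AE t in M. 0 \<le> t" using assms unfolding prob_on_Rplus_def by simp
  show "space M = UNIV" using sets_eq_imp_space_eq[OF ss] by simp
qed

lemma integrable_bdd:
  fixes g :: "real \<Rightarrow> 'b::{banach,second_countable_topology}"
  assumes M: "prob_on_Rplus M" and g: "g \<in> borel_measurable borel"
    and b: "\<And>t. t \<ge> 0 \<Longrightarrow> norm (g t) \<le> B"
  shows "integrable M g"
proof -
  interpret prob_space M using pR[OF M] by simp
  have gm: "g \<in> borel_measurable M"
    using g measurable_cong_sets[OF pR(2)[OF M] refl] by blast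
  have "AE t in M. norm (g t) \<le> B"
    using pR(3)[OF M] by (rule eventually_mono) (use b in auto)
  then show ?thesis using gm by (rule integrable_const_bound)
qed

lemma f_meas: "(\<lambda>t::real. of_real t / (1 + s * of_real t) :: complex) \<in> borel_measurable borel"
  by measurable

lemma f_bound:
  fixes s :: complex and t :: real
  assumes "Im s > 0" "t \<ge> 0"
  shows "cmod (of_real t / (1 + s * of_real t)) \<le> 1 / Im s"
proof (cases "t = 0")
  case True then show ?thesis using assms by simp
next
  case False
  hence tp: "t > 0" using assms by simp
  have c: "cmod (1 + s * of_real t) \<ge> Im s * t" by (rule norm_ge_Im_t[OF assms])
  have pos: "Im s * t > 0" using tp assms by simp
  have pos2: "0 < cmod (1 + s * of_real t) * (Im s * t)"
    using c pos by (metis mult_pos_pos order_less_le_trans)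
  have "t / cmod (1 + s * of_real t) \<le> t / (Im s * t)"
    by (rule divide_left_mono[OF c _ pos2]) (use tp in simp)
  also have "\<dots> = 1 / Im s" using tp by simp
  finally have le: "t / cmod (1 + s * of_real t) \<le> 1 / Im s" .
  have eq: "cmod (of_real t / (1 + s * of_real t)) = t / cmod (1 + s * of_real t)"
    using tp by (simp add: norm_divide)
  show ?thesis using le eq by linarith
qed


lemmas f_meas'[measurable] = f_meas

lemma meas_M:
  assumes M: "prob_on_Rplus M" and g: "g \<in> borel_measurable borel"
  shows "g \<in> borel_measurable M"
  using g measurable_cong_sets[OF pR(2)[OF M] refl] by blast

lemma lint_aff:
  fixes g :: "real \<Rightarrow> real"
  assumes M: "prob_on_Rplus M" and g: "integrable M g"
  shows "(LINT t|M. (a + b * g t)) = a + b * (LINT t|M. g t)"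
proof -
  interpret prob_space M using pR[OF M] by simp
  have i1: "integrable M (\<lambda>t. a)" by simp
  have i2: "integrable M (\<lambda>t. b * g t)" using g by simp
  have "(LINT t|M. (a + b * g t)) = (LINT t|M. a) + (LINT t|M. b * g t)"
    by (rule Bochner_Integration.integral_add[OF i1 i2])
  also have "(LINT t|M. a) = a" using prob_space by simp
  also have "(LINT t|M. b * g t) = b * (LINT t|M. g t)" by simp
  finally show ?thesis .
qed

lemma amgm:
  fixes a x :: real
  assumes "a > 0"
  shows "x \<le> a / 2 + x\<^sup>2 / (2 * a)"
proof -
  have "0 \<le> (x - a)\<^sup>2" by simp
  hence "2 * a * x \<le> a\<^sup>2 + x\<^sup>2" by (simp add: power2_eq_square algebra_simps)
  thus ?thesis using assms by (simp add: field_simps power2_eq_square)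
qed

lemma K_int:
  assumes M: "prob_on_Rplus M" and s: "Im s > 0"
  shows "integrable M (\<lambda>t. of_real t / (1 + s * of_real t))"
    "integrable M (\<lambda>t. cmod (of_real t / (1 + s * of_real t)))"
    "integrable M (\<lambda>t. (cmod (of_real t / (1 + s * of_real t)))\<^sup>2)"
proof -
  have fb: "\<And>t. t \<ge> 0 \<Longrightarrow> cmod (of_real t / (1 + s * of_real t)) \<le> 1 / Im s"
    using f_bound[OF s] by blast
  show "integrable M (\<lambda>t. of_real t / (1 + s * of_real t))"
    by (rule integrable_bdd[OF M f_meas fb])
  have m1: "(\<lambda>t. cmod (of_real t / (1 + s * of_real t))) \<in> borel_measurable borel" by measurable
  show "integrable M (\<lambda>t. cmod (of_real t / (1 + s * of_real t)))"
    by (rule integrable_bdd[OF M m1]) (use fb in simp)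
  have m2: "(\<lambda>t. (cmod (of_real t / (1 + s * of_real t)))\<^sup>2) \<in> borel_measurable borel" by measurable
  show "integrable M (\<lambda>t. (cmod (of_real t / (1 + s * of_real t)))\<^sup>2)"
  proof (rule integrable_bdd[OF M m2])
    fix t :: real assume "t \<ge> 0"
    hence "cmod (of_real t / (1 + s * of_real t)) \<le> 1 / Im s" by (rule fb)
    hence "(cmod (of_real t / (1 + s * of_real t)))\<^sup>2 \<le> (1 / Im s)\<^sup>2"
      by (rule power_mono) simp
    thus "norm ((cmod (of_real t / (1 + s * of_real t)))\<^sup>2) \<le> (1 / Im s)\<^sup>2" by simp
  qed
qed

lemma K_Im:
  assumes M: "prob_on_Rplus M" and s: "Im s > 0"
  shows "Im (LINT t|M. of_real t / (1 + s * of_real t))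
    = - Im s * (LINT t|M. (cmod (of_real t / (1 + s * of_real t)))\<^sup>2)"
proof -
  have "Im (LINT t|M. of_real t / (1 + s * of_real t))
      = (LINT t|M. Im (of_real t / (1 + s * of_real t)))"
    using integral_Im[OF K_int(1)[OF M s]] by simp
  also have "\<dots> = (LINT t|M. - Im s * (cmod (of_real t / (1 + s * of_real t)))\<^sup>2)"
  proof (rule integral_cong_AE)
    show "(\<lambda>t. Im (of_real t / (1 + s * of_real t))) \<in> borel_measurable M"
      by (rule meas_M[OF M]) measurable
    show "(\<lambda>t. - Im s * (cmod (of_real t / (1 + s * of_real t)))\<^sup>2) \<in> borel_measurable M"
      by (rule meas_M[OF M]) measurable
    show "AE t in M. Im (of_real t / (1 + s * of_real t)) = - Im s * (cmod (of_real t / (1 + s * of_real t)))\<^sup>2"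
      by (rule eventually_mono[OF pR(3)[OF M]]) (rule Im_f[OF s])
  qed
  also have "\<dots> = - Im s * (LINT t|M. (cmod (of_real t / (1 + s * of_real t)))\<^sup>2)"
    by simp
  finally show ?thesis .
qed

lemma K_CS:
  assumes M: "prob_on_Rplus M" and s: "Im s > 0"
  shows "(cmod (LINT t|M. of_real t / (1 + s * of_real t)))\<^sup>2
    \<le> (LINT t|M. (cmod (of_real t / (1 + s * of_real t)))\<^sup>2)"
proof -
  define a where "a = (LINT t|M. cmod (of_real t / (1 + s * of_real t)))"
  define I where "I = (LINT t|M. (cmod (of_real t / (1 + s * of_real t)))\<^sup>2)"
  have Ka: "cmod (LINT t|M. of_real t / (1 + s * of_real t)) \<le> a"
    unfolding a_def by (rule integral_norm_bound)
  have a0: "0 \<le> a" unfolding a_def by (rule integral_nonneg_AE) simp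
  have I0: "0 \<le> I" unfolding I_def by (rule integral_nonneg_AE) simp
  have "a\<^sup>2 \<le> I"
  proof (cases "a = 0")
    case True then show ?thesis using I0 by simp
  next
    case False
    hence ap: "a > 0" using a0 by simp
    have "a \<le> (LINT t|M. (a / 2 + 1 / (2 * a) * (cmod (of_real t / (1 + s * of_real t)))\<^sup>2))"
    proof -
      have "a = (LINT t|M. cmod (of_real t / (1 + s * of_real t)))" by (simp add: a_def)
      also have "\<dots> \<le> (LINT t|M. (a / 2 + 1 / (2 * a) * (cmod (of_real t / (1 + s * of_real t)))\<^sup>2))"
      proof (rule integral_mono)
        show "integrable M (\<lambda>t. cmod (of_real t / (1 + s * of_real t)))" by (rule K_int(2)[OF M s])
        interpret prob_space M using pR[OF M] by simp
        show "integrable M (\<lambda>t. a / 2 + 1 / (2 * a) * (cmod (of_real t / (1 + s * of_real t)))\<^sup>2)"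
          by (rule Bochner_Integration.integrable_add) (auto intro!: integrable_mult_right K_int(3)[OF M s])
        fix t show "cmod (of_real t / (1 + s * of_real t)) \<le> a / 2 + 1 / (2 * a) * (cmod (of_real t / (1 + s * of_real t)))\<^sup>2"
          using amgm[OF ap, of "cmod (of_real t / (1 + s * of_real t))"] by simp
      qed
      finally show ?thesis .
    qed
    also have "\<dots> = a / 2 + 1 / (2 * a) * I"
      unfolding I_def by (rule lint_aff[OF M K_int(3)[OF M s]])
    finally have "a \<le> a / 2 + 1 / (2 * a) * I" .
    hence "2 * a * a \<le> a * a + I" using ap by (simp add: field_simps)
    thus ?thesis by (simp add: power2_eq_square)
  qed
  moreover have "(cmod (LINT t|M. of_real t / (1 + s * of_real t)))\<^sup>2 \<le> a\<^sup>2"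
    using Ka by (rule power_mono) simp
  ultimately show ?thesis unfolding I_def by linarith
qed

lemma K_Imq:
  assumes M: "prob_on_Rplus M" and s: "Im s > 0"
  shows "Im (s * (LINT t|M. of_real t / (1 + s * of_real t))) \<ge> 0"
proof -
  have int2: "integrable M (\<lambda>t. s * (of_real t / (1 + s * of_real t)))"
    by (rule integrable_mult_right[OF K_int(1)[OF M s]])
  have e1: "s * (LINT t|M. of_real t / (1 + s * of_real t)) = (LINT t|M. s * (of_real t / (1 + s * of_real t)))"
    by (rule integral_mult_right_zero[symmetric])
  have e2: "(LINT t|M. Im (s * (of_real t / (1 + s * of_real t)))) = Im (LINT t|M. s * (of_real t / (1 + s * of_real t)))"
    by (rule integral_Im[OF int2])
  have "Im (s * (LINT t|M. of_real t / (1 + s * of_real t))) = (LINT t|M. Im (s * (of_real t / (1 + s * of_real t))))"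
    unfolding e1 e2 ..
  also have "\<dots> \<ge> 0"
  proof (rule integral_nonneg_AE)
    show "AE t in M. 0 \<le> Im (s * (of_real t / (1 + s * of_real t)))"
    proof (rule eventually_mono[OF pR(3)[OF M]])
      fix t :: real assume t: "0 \<le> t"
      show "0 \<le> Im (s * (of_real t / (1 + s * of_real t)))"
        unfolding Im_qf[OF s t] using s t by simp
    qed
  qed
  finally show ?thesis .
qed


lemma real_K:
  fixes \<sigma> T l t u :: real
  assumes s0: "\<sigma> \<ge> 0" and T: "T > 0" and sT: "\<sigma> * T \<le> 1/2" and l: "l > 0"
    and t: "t \<ge> 0" and u: "u > 0" and ut: "u \<ge> 1 - \<sigma> * t"
  shows "\<sigma> * (t / u) \<le> 2 * \<sigma> * T + l / 2 * indicator {T<..} t + \<sigma>\<^sup>2 * (t / u)\<^sup>2 / (2 * l)"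
proof (cases "t \<le> T")
  case True
  then have ind: "indicator {T<..} t = (0::real)" by simp
  have "\<sigma> * t \<le> \<sigma> * T" using True s0 by (simp add: mult_left_mono)
  hence "u \<ge> 1/2" using sT ut by linarith
  hence "t / u \<le> t / (1/2)" using t by (intro divide_left_mono) auto
  hence "t / u \<le> 2 * t" by simp
  hence "\<sigma> * (t / u) \<le> \<sigma> * (2 * t)" using s0 by (rule mult_left_mono)
  also have "\<dots> \<le> 2 * \<sigma> * T" using \<open>\<sigma> * t \<le> \<sigma> * T\<close> by (simp add: mult.commute)
  finally have a: "\<sigma> * (t / u) \<le> 2 * \<sigma> * T" .
  have "0 \<le> \<sigma>\<^sup>2 * (t / u)\<^sup>2 / (2 * l)" using l by simp
  with a ind show ?thesis by simp
next
  case False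
  then have ind: "indicator {T<..} t = (1::real)" by simp
  have a: "\<sigma> * (t / u) \<le> l / 2 + (\<sigma> * (t / u))\<^sup>2 / (2 * l)" by (rule amgm[OF l])
  have eq: "(\<sigma> * (t / u))\<^sup>2 = \<sigma>\<^sup>2 * (t / u)\<^sup>2" by (rule power_mult_distrib)
  have a': "\<sigma> * (t / u) \<le> l / 2 + \<sigma>\<^sup>2 * (t / u)\<^sup>2 / (2 * l)" using a by (simp only: eq)
  have nn: "0 \<le> 2 * \<sigma> * T" using s0 T by simp
  have e: "l / 2 * indicator {T<..} t = l / 2" using ind by simp
  show ?thesis using a' nn e by linarith
qed

lemma real_V:
  fixes R d l t u :: real
  assumes R: "R > 0" and d: "d > 0" and Rd: "2 / R \<le> d" and l: "l > 0"
    and t: "t > 0" and u: "u > 0" and u1: "u \<ge> 1 - R * t" and u2: "u \<ge> R * t - 1"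
  shows "1 / u \<le> (2 + l / 2) * indicator {0<..d} t + 2 / (R * d) + 2 * R\<^sup>2 * (t / u)\<^sup>2 / l"
proof -
  have nn1: "0 \<le> 2 / (R * d)" using R d by simp
  have nn2: "0 \<le> 2 * R\<^sup>2 * (t / u)\<^sup>2 / l" using l by simp
  show ?thesis
  proof (cases "R * t \<le> 1/2")
    case True
    hence "u \<ge> 1/2" using u1 by linarith
    hence "1 / u \<le> 1 / (1/2)" using u by (intro divide_left_mono) auto
    hence a: "1 / u \<le> 2" by simp
    have "t \<le> 1 / (2 * R)" using True R by (simp add: field_simps)
    also have "\<dots> \<le> 2 / R" using R by (simp add: field_simps)
    finally have "t \<le> d" using Rd by linarith
    hence "indicator {0<..d} t = (1::real)" using t by simp
    hence e: "(2 + l / 2) * indicator {0<..d} t = 2 + l / 2" by simp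
    show ?thesis using a nn1 nn2 l e by linarith
  next
    case False
    show ?thesis
    proof (cases "R * t < 2")
      case True
      have "t < 2 / R" using True R by (simp add: field_simps)
      hence "t \<le> d" using Rd by linarith
      hence ind: "indicator {0<..d} t = (1::real)" using t by simp
      have a: "1 / u \<le> l / 2 + (1 / u)\<^sup>2 / (2 * l)" by (rule amgm[OF l])
      have "1 \<le> 2 * R * t" using False by simp
      hence "1 \<le> (2 * R * t)\<^sup>2" by (rule one_le_power)
      hence "1 * (1 / u)\<^sup>2 \<le> (2 * R * t)\<^sup>2 * (1 / u)\<^sup>2" by (rule mult_right_mono) simp
      hence "(1 / u)\<^sup>2 \<le> (2 * R * t)\<^sup>2 * (1 / u)\<^sup>2" by simp
      also have "\<dots> = 4 * R\<^sup>2 * (t / u)\<^sup>2" by (simp add: power_mult_distrib power_divide)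
      finally have "(1 / u)\<^sup>2 / (2 * l) \<le> 4 * R\<^sup>2 * (t / u)\<^sup>2 / (2 * l)"
        using l by (intro divide_right_mono) auto
      also have "\<dots> = 2 * R\<^sup>2 * (t / u)\<^sup>2 / l" using l by simp
      finally have b: "(1 / u)\<^sup>2 / (2 * l) \<le> 2 * R\<^sup>2 * (t / u)\<^sup>2 / l" .
      have e: "(2 + l / 2) * indicator {0<..d} t = 2 + l / 2" using ind by simp
      show ?thesis using a b e nn1 nn2 by linarith
    next
      case False
      hence Rt: "R * t \<ge> 2" by simp
      hence "u \<ge> R * t / 2" using u2 by linarith
      hence "1 / u \<le> 1 / (R * t / 2)" using Rt u by (intro divide_left_mono) auto
      hence a: "1 / u \<le> 2 / (R * t)" by simp
      show ?thesis
      proof (cases "t \<le> d")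
        case True
        hence ind: "indicator {0<..d} t = (1::real)" using t by simp
        have h: "2 / (R * t) \<le> 1" using Rt R t by (simp add: field_simps)
        have e: "(2 + l / 2) * indicator {0<..d} t = 2 + l / 2" using ind by simp
        show ?thesis using a h e nn1 nn2 l by linarith
      next
        case False
        hence h: "2 / (R * t) \<le> 2 / (R * d)" using R d by (intro divide_left_mono) auto
        have e: "(2 + l / 2) * indicator {0<..d} t = 0" using False by simp
        show ?thesis using a h e nn2 by linarith
      qed
    qed
  qed
qed


lemma lint_aff3:
  fixes g h :: "real \<Rightarrow> real"
  assumes M: "prob_on_Rplus M" and g: "integrable M g" and h: "integrable M h"
  shows "(LINT t|M. (a + b * g t + c * h t)) = a + b * (LINT t|M. g t) + c * (LINT t|M. h t)"
proof -
  interpret prob_space M using pR[OF M] by simp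
  have i1: "integrable M (\<lambda>t. a + b * g t)" using g by simp
  have i2: "integrable M (\<lambda>t. c * h t)" using h by simp
  have "(LINT t|M. (a + b * g t + c * h t)) = (LINT t|M. (a + b * g t)) + (LINT t|M. c * h t)"
    by (rule Bochner_Integration.integral_add[OF i1 i2])
  also have "(LINT t|M. (a + b * g t)) = a + b * (LINT t|M. g t)" by (rule lint_aff[OF M g])
  also have "(LINT t|M. c * h t) = c * (LINT t|M. h t)" by simp
  finally show ?thesis .
qed

lemma ind_meas: "A \<in> sets borel \<Longrightarrow> (\<lambda>t. indicator A t :: real) \<in> borel_measurable borel"
  by simp

lemma lint_ind:
  assumes M: "prob_on_Rplus M" and A: "A \<in> sets borel"
  shows "integrable M (\<lambda>t. indicator A t :: real)" "(LINT t|M. indicator A t) = measure M A"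
proof -
  have m: "(\<lambda>t. indicator A t :: real) \<in> borel_measurable borel" using A by simp
  show "integrable M (\<lambda>t. indicator A t :: real)"
    by (rule integrable_bdd[OF M m, where B=1]) (simp add: indicator_def)
  show "(LINT t|M. indicator A t) = measure M A"
    using pR(4)[OF M] by simp
qed

lemma norm_f_eq:
  fixes s :: complex and t :: real
  assumes "t \<ge> 0"
  shows "cmod (of_real t / (1 + s * of_real t)) = t / cmod (1 + s * of_real t)"
  using assms by (simp add: norm_divide)

lemma K_split:
  assumes M: "prob_on_Rplus M" and s: "Im s > 0" and T: "T > 0"
    and sT: "cmod s * T \<le> 1/2" and l: "l > 0"
  shows "cmod s * cmod (LINT t|M. of_real t / (1 + s * of_real t))
    \<le> 2 * cmod s * T + l / 2 * measure M {T<..}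
       + (cmod s)\<^sup>2 / (2 * l) * (LINT t|M. (cmod (of_real t / (1 + s * of_real t)))\<^sup>2)"
proof -
  have "cmod (LINT t|M. of_real t / (1 + s * of_real t)) \<le> (LINT t|M. cmod (of_real t / (1 + s * of_real t)))"
    by (rule integral_norm_bound)
  hence "cmod s * cmod (LINT t|M. of_real t / (1 + s * of_real t))
     \<le> cmod s * (LINT t|M. cmod (of_real t / (1 + s * of_real t)))"
    by (rule mult_left_mono) simp
  also have "\<dots> = (LINT t|M. cmod s * cmod (of_real t / (1 + s * of_real t)))"
    by (rule integral_mult_right_zero[symmetric])
  also have "\<dots> \<le> (LINT t|M. (2 * cmod s * T + l / 2 * indicator {T<..} t
       + (cmod s)\<^sup>2 / (2 * l) * (cmod (of_real t / (1 + s * of_real t)))\<^sup>2))"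
  proof (rule integral_mono_AE)
    show "integrable M (\<lambda>t. cmod s * cmod (of_real t / (1 + s * of_real t)))"
      by (rule integrable_mult_right[OF K_int(2)[OF M s]])
    interpret prob_space M using pR[OF M] by simp
    show "integrable M (\<lambda>t. 2 * cmod s * T + l / 2 * indicator {T<..} t
       + (cmod s)\<^sup>2 / (2 * l) * (cmod (of_real t / (1 + s * of_real t)))\<^sup>2)"
      using lint_ind(1)[OF M, of "{T<..}"] K_int(3)[OF M s] by simp
    show "AE t in M. cmod s * cmod (of_real t / (1 + s * of_real t))
       \<le> 2 * cmod s * T + l / 2 * indicator {T<..} t
       + (cmod s)\<^sup>2 / (2 * l) * (cmod (of_real t / (1 + s * of_real t)))\<^sup>2"
    proof (rule eventually_mono[OF pR(3)[OF M]])
      fix t :: real assume t: "0 \<le> t"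
      have nz: "1 + s * of_real t \<noteq> 0" by (rule den_nz[OF s t])
      have u: "cmod (1 + s * of_real t) > 0" using nz by simp
      have ut: "cmod (1 + s * of_real t) \<ge> 1 - cmod s * t" by (rule norm_ge_1_minus[OF t])
      have fe: "cmod (of_real t / (1 + s * of_real t)) = t / cmod (1 + s * of_real t)"
        by (rule norm_f_eq[OF t])
      have r: "cmod s * (t / cmod (1 + s * of_real t)) \<le> 2 * cmod s * T + l / 2 * indicator {T<..} t
          + (cmod s)\<^sup>2 * (t / cmod (1 + s * of_real t))\<^sup>2 / (2 * l)"
        by (rule real_K[OF norm_ge_zero T sT l t u ut])
      have e: "(cmod s)\<^sup>2 * (t / cmod (1 + s * of_real t))\<^sup>2 / (2 * l)
          = (cmod s)\<^sup>2 / (2 * l) * (t / cmod (1 + s * of_real t))\<^sup>2" by simp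
      show "cmod s * cmod (of_real t / (1 + s * of_real t))
       \<le> 2 * cmod s * T + l / 2 * indicator {T<..} t
       + (cmod s)\<^sup>2 / (2 * l) * (cmod (of_real t / (1 + s * of_real t)))\<^sup>2"
        unfolding fe using r e by linarith
    qed
  qed
  also have "\<dots> = 2 * cmod s * T + l / 2 * (LINT t|M. indicator {T<..} t)
       + (cmod s)\<^sup>2 / (2 * l) * (LINT t|M. (cmod (of_real t / (1 + s * of_real t)))\<^sup>2)"
    by (rule lint_aff3[OF M lint_ind(1)[OF M] K_int(3)[OF M s]]) simp
  also have "(LINT t|M. indicator {T<..} t) = measure M {T<..}"
    by (rule lint_ind(2)[OF M]) simp
  finally show ?thesis .
qed


lemma one_minus_eq:
  fixes s :: complex and t :: real
  assumes "1 + s * of_real t \<noteq> 0"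
  shows "1 - s * (of_real t / (1 + s * of_real t)) = 1 / (1 + s * of_real t)"
proof -
  have "s * (of_real t / (1 + s * of_real t)) = (s * of_real t) / (1 + s * of_real t)" by simp
  moreover have "1 - (s * of_real t) / (1 + s * of_real t) = 1 / (1 + s * of_real t)"
    using assms by (simp add: field_simps)
  ultimately show ?thesis by simp
qed

lemma V_split:
  assumes M: "prob_on_Rplus M" and s: "Im s > 0" and d: "d > 0"
    and sd: "2 / cmod s \<le> d" and l: "l > 0"
  shows "cmod (of_real (measure M {0<..}) - s * (LINT t|M. of_real t / (1 + s * of_real t)))
    \<le> 2 / (cmod s * d) + (2 + l / 2) * measure M {0<..d}
       + 2 * (cmod s)\<^sup>2 / l * (LINT t|M. (cmod (of_real t / (1 + s * of_real t)))\<^sup>2)"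
proof -
  have sp: "cmod s > 0" using s by (metis complex.sel(2) norm_le_zero_iff not_le zero_complex.sel(2) order_less_irrefl)
  have os: "{0::real<..} \<in> sets borel" by (rule borel_open) (rule open_greaterThan)
  have e1: "(LINT t|M. of_real (indicator {0<..} t :: real) :: complex) = of_real (measure M {0<..})"
    using lint_ind(2)[OF M os] by simp
  have e2: "s * (LINT t|M. of_real t / (1 + s * of_real t)) = (LINT t|M. s * (of_real t / (1 + s * of_real t)))"
    by (rule integral_mult_right_zero[symmetric])
  have mi0: "(\<lambda>t::real. indicator {0<..} t :: real) \<in> borel_measurable borel"
    by (rule ind_meas[OF os])
  have mi: "(\<lambda>t::real. of_real (indicator {0<..} t :: real) :: complex) \<in> borel_measurable borel"
    using measurable_comp[OF mi0 borel_measurable_of_real] by (simp add: comp_def)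
  have int1: "integrable M (\<lambda>t::real. of_real (indicator {0<..} t :: real) :: complex)"
    by (rule integrable_bdd[OF M mi, where B=1]) (simp add: indicator_def)
  have int2: "integrable M (\<lambda>t. s * (of_real t / (1 + s * of_real t)))"
    by (rule integrable_mult_right[OF K_int(1)[OF M s]])
  have "of_real (measure M {0<..}) - s * (LINT t|M. of_real t / (1 + s * of_real t))
      = (LINT t|M. (of_real (indicator {0<..} t :: real) - s * (of_real t / (1 + s * of_real t))))"
    unfolding e1[symmetric] e2 by (rule Bochner_Integration.integral_diff[OF int1 int2, symmetric])
  hence "cmod (of_real (measure M {0<..}) - s * (LINT t|M. of_real t / (1 + s * of_real t)))
      \<le> (LINT t|M. cmod (of_real (indicator {0<..} t :: real) - s * (of_real t / (1 + s * of_real t))))"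
    by (simp only: integral_norm_bound)
  also have "\<dots> \<le> (LINT t|M. (2 / (cmod s * d) + (2 + l / 2) * indicator {0<..d} t
       + 2 * (cmod s)\<^sup>2 / l * (cmod (of_real t / (1 + s * of_real t)))\<^sup>2))"
  proof (rule integral_mono_AE')
    interpret prob_space M using pR[OF M] by simp
    show "integrable M (\<lambda>t. 2 / (cmod s * d) + (2 + l / 2) * indicator {0<..d} t
       + 2 * (cmod s)\<^sup>2 / l * (cmod (of_real t / (1 + s * of_real t)))\<^sup>2)"
      using lint_ind(1)[OF M, of "{0<..d}"] K_int(3)[OF M s] by simp
    have nn: "\<And>t. 0 \<le> 2 / (cmod s * d) + (2 + l / 2) * indicator {0<..d} t
       + 2 * (cmod s)\<^sup>2 / l * (cmod (of_real t / (1 + s * of_real t)))\<^sup>2"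
      using sp d l by (intro add_nonneg_nonneg) (auto simp: indicator_def)
    show "AE t in M. 0 \<le> 2 / (cmod s * d) + (2 + l / 2) * indicator {0<..d} t
       + 2 * (cmod s)\<^sup>2 / l * (cmod (of_real t / (1 + s * of_real t)))\<^sup>2"
      using nn by simp
    show "AE t in M. cmod (of_real (indicator {0<..} t :: real) - s * (of_real t / (1 + s * of_real t)))
       \<le> 2 / (cmod s * d) + (2 + l / 2) * indicator {0<..d} t
       + 2 * (cmod s)\<^sup>2 / l * (cmod (of_real t / (1 + s * of_real t)))\<^sup>2"
    proof (rule eventually_mono[OF pR(3)[OF M]])
      fix t :: real assume t: "0 \<le> t"
      show "cmod (of_real (indicator {0<..} t :: real) - s * (of_real t / (1 + s * of_real t)))
       \<le> 2 / (cmod s * d) + (2 + l / 2) * indicator {0<..d} t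
       + 2 * (cmod s)\<^sup>2 / l * (cmod (of_real t / (1 + s * of_real t)))\<^sup>2"
      proof (cases "t = 0")
        case True
        then show ?thesis using nn[of t] by simp
      next
        case False
        hence tp: "t > 0" using t by simp
        have nz: "1 + s * of_real t \<noteq> 0" by (rule den_nz[OF s t])
        have u: "cmod (1 + s * of_real t) > 0" using nz by simp
        have u1: "cmod (1 + s * of_real t) \<ge> 1 - cmod s * t" by (rule norm_ge_1_minus[OF t])
        have u2: "cmod (1 + s * of_real t) \<ge> cmod s * t - 1" by (rule norm_ge_minus_1[OF t])
        have fe: "cmod (of_real t / (1 + s * of_real t)) = t / cmod (1 + s * of_real t)"
          by (rule norm_f_eq[OF t])
        have ind1: "of_real (indicator {0<..} t :: real) = (1::complex)" using tp by simp
        have lhs: "cmod (of_real (indicator {0<..} t :: real) - s * (of_real t / (1 + s * of_real t)))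
            = 1 / cmod (1 + s * of_real t)"
          unfolding ind1 one_minus_eq[OF nz] by (simp add: norm_divide)
        have r: "1 / cmod (1 + s * of_real t) \<le> (2 + l / 2) * indicator {0<..d} t + 2 / (cmod s * d)
            + 2 * (cmod s)\<^sup>2 * (t / cmod (1 + s * of_real t))\<^sup>2 / l"
          by (rule real_V[OF sp d sd l tp u u1 u2])
        have e: "2 * (cmod s)\<^sup>2 * (t / cmod (1 + s * of_real t))\<^sup>2 / l
            = 2 * (cmod s)\<^sup>2 / l * (t / cmod (1 + s * of_real t))\<^sup>2" by simp
        show ?thesis unfolding lhs fe using r e by linarith
      qed
    qed
  qed
  also have "\<dots> = 2 / (cmod s * d) + (2 + l / 2) * (LINT t|M. indicator {0<..d} t)
       + 2 * (cmod s)\<^sup>2 / l * (LINT t|M. (cmod (of_real t / (1 + s * of_real t)))\<^sup>2)"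
    by (rule lint_aff3[OF M lint_ind(1)[OF M] K_int(3)[OF M s]]) simp
  also have "(LINT t|M. indicator {0<..d} t) = measure M {0<..d}"
    by (rule lint_ind(2)[OF M]) simp
  finally show ?thesis .
qed


lemma ident:
  fixes z p q :: complex
  shows "(cmod z)\<^sup>2 * Im p * Im q - Im (z * p) * Im (z * q) = Im z * Im (- z * p * q)"
proof -
  have cz: "(cmod z)\<^sup>2 = (Re z)\<^sup>2 + (Im z)\<^sup>2" by (rule cmod_power2)
  show ?thesis unfolding cz by (simp add: power2_eq_square algebra_simps)
qed

lemma div_split:
  fixes a z w :: complex
  shows "a / (- z * w) = (- 1 / z) * (a / w)"
  by (simp add: divide_inverse inverse_mult_distrib mult_ac)


lemma small_near0:
  assumes M: "prob_on_Rplus M" and e: "e > 0"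
  shows "\<exists>d>0. measure M {0<..d} < e"
proof -
  interpret prob_space M using pR[OF M] by simp
  define A where "A n = {0::real<..1 / real (Suc n)}" for n
  have rA: "range A \<subseteq> sets M"
  proof (rule subsetI)
    fix X assume "X \<in> range A"
    then obtain n where X: "X = A n" by blast
    show "X \<in> sets M" unfolding X A_def pR(2)[OF M] by (rule greaterThanAtMost_borel)
  qed
  have dA: "decseq A" unfolding A_def decseq_def
  proof (intro allI impI subsetI)
    fix m n :: nat and x :: real assume mn: "m \<le> n" and x: "x \<in> {0<..1 / real (Suc n)}"
    have "1 / real (Suc n) \<le> 1 / real (Suc m)" using mn by (simp add: frac_le)
    thus "x \<in> {0<..1 / real (Suc m)}" using x by simp
  qed
  have iA: "(\<Inter>n. A n) = {}"
  proof (rule equals0I)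
    fix x assume "x \<in> (\<Inter>n. A n)"
    hence xA: "\<And>n. x \<in> A n" by blast
    have x0: "x > 0" using xA[of 0] unfolding A_def by simp
    have xl: "\<And>n. x \<le> 1 / real (Suc n)" using xA unfolding A_def by simp
    obtain n where "inverse (real (Suc n)) < x" using reals_Archimedean[OF x0] by blast
    with xl[of n] show False by (simp add: divide_inverse)
  qed
  have "(\<lambda>n. measure M (A n)) \<longlonglongrightarrow> measure M (\<Inter>n. A n)"
    by (rule finite_Lim_measure_decseq[OF rA dA])
  hence "(\<lambda>n. measure M (A n)) \<longlonglongrightarrow> 0" using iA by simp
  hence "eventually (\<lambda>n. measure M (A n) < e) sequentially"
    using e by (rule order_tendstoD(2))
  then obtain n where n: "measure M (A n) < e" unfolding eventually_sequentially by blast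
  have "1 / real (Suc n) > 0" by simp
  with n show ?thesis unfolding A_def by blast
qed

lemma small_tail:
  assumes M: "prob_on_Rplus M" and e: "e > 0"
  shows "\<exists>T>0. measure M {T<..} < e"
proof -
  interpret prob_space M using pR[OF M] by simp
  define A where "A n = {real (Suc n)<..}" for n
  have rA: "range A \<subseteq> sets M"
  proof (rule subsetI)
    fix X assume "X \<in> range A"
    then obtain n where X: "X = A n" by blast
    show "X \<in> sets M" unfolding X A_def pR(2)[OF M] by (rule greaterThan_borel)
  qed
  have dA: "decseq A" unfolding A_def decseq_def
  proof (intro allI impI subsetI)
    fix m n :: nat and x :: real assume mn: "m \<le> n" and x: "x \<in> {real (Suc n)<..}"
    have "real (Suc m) \<le> real (Suc n)" using mn by simp
    thus "x \<in> {real (Suc m)<..}" using x by simp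
  qed
  have iA: "(\<Inter>n. A n) = {}"
  proof (rule equals0I)
    fix x assume "x \<in> (\<Inter>n. A n)"
    hence xA: "\<And>n. x \<in> A n" by blast
    have xl: "\<And>n. real (Suc n) < x" using xA unfolding A_def by simp
    obtain n :: nat where "x \<le> real n" using real_arch_simple by blast
    with xl[of n] show False by simp
  qed
  have "(\<lambda>n. measure M (A n)) \<longlonglongrightarrow> measure M (\<Inter>n. A n)"
    by (rule finite_Lim_measure_decseq[OF rA dA])
  hence "(\<lambda>n. measure M (A n)) \<longlonglongrightarrow> 0" using iA by simp
  hence "eventually (\<lambda>n. measure M (A n) < e) sequentially"
    using e by (rule order_tendstoD(2))
  then obtain n where n: "measure M (A n) < e" unfolding eventually_sequentially by blast
  have "real (Suc n) > 0" by simp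
  with n show ?thesis unfolding A_def by blast
qed


lemma pos_mass:
  assumes M: "prob_on_Rplus M" and ne: "M \<noteq> return borel 0"
  shows "measure M {0<..} > 0"
proof (rule ccontr)
  assume "\<not> measure M {0<..} > 0"
  hence m0: "measure M {0<..} = 0" using measure_nonneg[of M "{0<..}"] by linarith
  interpret prob_space M using pR[OF M] by simp
  have sM: "{0::real<..} \<in> sets M" unfolding pR(2)[OF M] by (rule greaterThan_borel)
  have em: "emeasure M {0::real<..} = 0" using m0 by (simp add: emeasure_eq_measure)
  have "{0::real<..} \<in> null_sets M" by (rule null_setsI[OF em sM])
  hence AEn: "AE t in M. t \<notin> {0::real<..}" by (rule AE_not_in)
  have AE0: "AE t in M. t = 0"
    using AEn pR(3)[OF M] by eventually_elim simp
  have "M = return borel 0"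
  proof (rule measure_eqI)
    show "sets M = sets (return borel 0)" using pR(2)[OF M] by simp
    fix A assume A: "A \<in> sets M"
    hence Ab: "A \<in> sets borel" using pR(2)[OF M] by simp
    define B where "B = (if (0::real) \<in> A then space M else {})"
    have B: "B \<in> sets M" unfolding B_def by simp
    have "emeasure M A = emeasure M B"
    proof (rule emeasure_eq_AE)
      show "AE x in M. (x \<in> A) = (x \<in> B)"
        using AE0 by eventually_elim (simp add: B_def pR(4)[OF M])
    qed (rule A, rule B)
    also have "emeasure M B = indicator A (0::real)"
      unfolding B_def using emeasure_space_1 by (simp add: indicator_def)
    also have "\<dots> = emeasure (return borel 0) A" using Ab by (simp add: emeasure_return)
    finally show "emeasure M A = emeasure (return borel 0) A" .
  qed
  with ne show False by simp
qed


lemma main_bound: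
  fixes c1 c2 \<eta> :: real and M1 M2 :: "real measure"
  assumes c1: "c1 > 0" and c2: "c2 > 0" and \<eta>: "\<eta> > 0"
    and M1: "prob_on_Rplus M1" and M2: "prob_on_Rplus M2"
    and m2: "measure M2 {0<..} > 0"
  shows "\<exists>R0. \<forall>z p q. Im z > 0 \<longrightarrow> \<eta> \<le> cmod z \<longrightarrow> Im p > 0 \<longrightarrow> Im q > 0 \<longrightarrow>
     p = of_real c1 * (LINT t|M1. of_real t / (- z * (1 + q * of_real t))) \<longrightarrow>
     q = of_real c2 * (LINT t|M2. of_real t / (- z * (1 + p * of_real t))) \<longrightarrow> cmod p \<le> R0"
proof -
  define m where "m = measure M2 {0<..}"
  have mp: "m > 0" unfolding m_def by (rule m2)
  define l2 where "l2 = 8 * c1 / (c2 * m)"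
  have l2p: "l2 > 0" unfolding l2_def using c1 c2 mp by simp
  have e2p: "m / (8 * (2 + l2 / 2)) > 0" using mp l2p by simp
  obtain d where d: "d > 0" and dm: "measure M2 {0<..d} < m / (8 * (2 + l2 / 2))"
    using small_near0[OF M2 e2p] by blast
  define P0 where "P0 = c2 * m / 2"
  have P0p: "P0 > 0" unfolding P0_def using c2 mp by simp
  define l1 where "l1 = 2 * c2 / P0"
  have l1p: "l1 > 0" unfolding l1_def using c2 P0p by simp
  have e1p: "P0 / (4 * c1 * l1) > 0" using P0p c1 l1p by simp
  obtain T where T: "T > 0" and Tm: "measure M1 {T<..} < P0 / (4 * c1 * l1)"
    using small_tail[OF M1 e1p] by blast
  define \<sigma>0 where "\<sigma>0 = min (1 / (2 * T)) (P0 / (16 * c1 * T))"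
  have \<sigma>0p: "\<sigma>0 > 0" unfolding \<sigma>0_def using T P0p c1 by simp
  define R0 where "R0 = max (2 / d) (max (16 / (d * m)) (sqrt (c1 * c2) / (\<eta> * \<sigma>0)))"
  show ?thesis
  proof (intro exI allI impI)
    fix z p q :: complex
    assume z: "Im z > 0" and z\<eta>: "\<eta> \<le> cmod z" and p: "Im p > 0" and q: "Im q > 0"
      and hp: "p = of_real c1 * (LINT t|M1. of_real t / (- z * (1 + q * of_real t)))"
      and hq: "q = of_real c2 * (LINT t|M2. of_real t / (- z * (1 + p * of_real t)))"
    show "cmod p \<le> R0"
    proof (rule ccontr)
      assume "\<not> cmod p \<le> R0"
      hence RR0: "cmod p > R0" by simp
      define R where "R = cmod p"
      define \<sigma> where "\<sigma> = cmod q"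
      define K1 where "K1 = (LINT t|M1. of_real t / (1 + q * of_real t))"
      define K2 where "K2 = (LINT t|M2. of_real t / (1 + p * of_real t))"
      define I1 where "I1 = (LINT t|M1. (cmod (of_real t / (1 + q * of_real t)))\<^sup>2)"
      define I2 where "I2 = (LINT t|M2. (cmod (of_real t / (1 + p * of_real t)))\<^sup>2)"
      have z0: "z \<noteq> 0" using z by auto
      have Rp: "R > 0" unfolding R_def using p by auto
      have \<sigma>p: "\<sigma> > 0" unfolding \<sigma>_def using q by auto
      have zp: "cmod z > 0" using z0 by simp
      have L1: "(LINT t|M1. of_real t / (- z * (1 + q * of_real t))) = (- 1 / z) * K1"
        unfolding K1_def div_split by (rule integral_mult_right_zero)
      have L2: "(LINT t|M2. of_real t / (- z * (1 + p * of_real t))) = (- 1 / z) * K2"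
        unfolding K2_def div_split by (rule integral_mult_right_zero)
      have eqp: "- z * p = of_real c1 * K1" using hp z0 unfolding L1 by (simp add: field_simps)
      have eqq: "- z * q = of_real c2 * K2" using hq z0 unfolding L2 by (simp add: field_simps)
      have ImK1: "Im K1 = - Im q * I1" unfolding K1_def I1_def by (rule K_Im[OF M1 q])
      have ImK2: "Im K2 = - Im p * I2" unfolding K2_def I2_def by (rule K_Im[OF M2 p])
      have CS1: "(cmod K1)\<^sup>2 \<le> I1" unfolding K1_def I1_def by (rule K_CS[OF M1 q])
      have CS2: "(cmod K2)\<^sup>2 \<le> I2" unfolding K2_def I2_def by (rule K_CS[OF M2 p])
      have Q1: "Im (q * K1) \<ge> 0" unfolding K1_def by (rule K_Imq[OF M1 q])
      have I1p: "I1 \<ge> 0" using CS1 by (meson order_trans zero_le_power2)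
      have I2p: "I2 \<ge> 0" using CS2 by (meson order_trans zero_le_power2)
      have Imzp: "Im (z * p) = c1 * Im q * I1"
      proof -
        have "Im (- z * p) = c1 * Im K1" unfolding eqp by simp
        thus ?thesis using ImK1 by simp
      qed
      have Imzq: "Im (z * q) = c2 * Im p * I2"
      proof -
        have "Im (- z * q) = c2 * Im K2" unfolding eqq by simp
        thus ?thesis using ImK2 by simp
      qed
      have W1: "- z * p * q = of_real c1 * (q * K1)" using eqp by (simp add: mult_ac)
      have W2: "- z * p * q = of_real c2 * (p * K2)"
      proof -
        have "- z * p * q = p * (- z * q)" by (simp add: mult_ac)
        also have "\<dots> = of_real c2 * (p * K2)" unfolding eqq by (simp add: mult_ac)
        finally show ?thesis .
      qed
      have ImW: "Im (- z * p * q) \<ge> 0" unfolding W1 using c1 Q1 by simp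
      have key: "Im (z * p) * Im (z * q) \<le> (cmod z)\<^sup>2 * Im p * Im q"
        using ident[of z p q] ImW z by (smt (verit) mult_nonneg_nonneg)
      define P where "P = cmod z * R * \<sigma>"
      define S where "S = \<sigma>\<^sup>2 * I1"
      define S' where "S' = R\<^sup>2 * I2"
      have Pp: "P > 0" unfolding P_def using zp Rp \<sigma>p by simp
      have czp: "cmod z * R = c1 * cmod K1"
      proof -
        have "cmod (- z * p) = cmod (of_real c1 * K1)" unfolding eqp ..
        thus ?thesis unfolding R_def using c1 by (simp add: norm_mult)
      qed
      have czq: "cmod z * \<sigma> = c2 * cmod K2"
      proof -
        have "cmod (- z * q) = cmod (of_real c2 * K2)" unfolding eqq ..
        thus ?thesis unfolding \<sigma>_def using c2 by (simp add: norm_mult)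
      qed
      have hP1: "P\<^sup>2 \<le> c1\<^sup>2 * S"
      proof -
        have "P\<^sup>2 = \<sigma>\<^sup>2 * c1\<^sup>2 * (cmod K1)\<^sup>2" unfolding P_def using czp
          by (simp add: power_mult_distrib mult_ac)
        also have "\<dots> \<le> \<sigma>\<^sup>2 * c1\<^sup>2 * I1" using CS1 by (intro mult_left_mono) auto
        finally show ?thesis unfolding S_def by (simp add: mult_ac)
      qed
      have hP2: "P\<^sup>2 \<le> c2\<^sup>2 * S'"
      proof -
        have "P\<^sup>2 = R\<^sup>2 * c2\<^sup>2 * (cmod K2)\<^sup>2" unfolding P_def using czq
          by (simp add: power_mult_distrib mult_ac)
        also have "\<dots> \<le> R\<^sup>2 * c2\<^sup>2 * I2" using CS2 by (intro mult_left_mono) auto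
        finally show ?thesis unfolding S'_def by (simp add: mult_ac)
      qed
      have hSS: "c1 * c2 * S * S' \<le> P\<^sup>2"
      proof -
        have "c1 * c2 * S * S' * (Im p * Im q) = \<sigma>\<^sup>2 * R\<^sup>2 * (Im (z * p) * Im (z * q))"
          unfolding S_def S'_def Imzp Imzq by (simp add: mult_ac)
        also have "\<dots> \<le> \<sigma>\<^sup>2 * R\<^sup>2 * ((cmod z)\<^sup>2 * Im p * Im q)"
          using key by (intro mult_left_mono) auto
        also have "\<dots> = P\<^sup>2 * (Im p * Im q)" unfolding P_def by (simp add: power_mult_distrib mult_ac)
        finally have "c1 * c2 * S * S' * (Im p * Im q) \<le> P\<^sup>2 * (Im p * Im q)" .
        moreover have "Im p * Im q > 0" using p q by simp
        ultimately show ?thesis by (rule mult_right_le_imp_le)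
      qed
      have Sp: "S > 0" using hP1 Pp c1
        by (smt (verit) mult_nonneg_nonpos zero_less_power zero_le_power2)
      have S'p: "S' > 0" using hP2 Pp c2
        by (smt (verit) mult_nonneg_nonpos zero_less_power zero_le_power2)
      have Sb: "S \<le> c2 / c1"
      proof -
        have "c1 * c2 * S * S' \<le> c2\<^sup>2 * S'" using hSS hP2 by linarith
        hence "(c1 * S) * (c2 * S') \<le> c2 * (c2 * S')" by (simp add: power2_eq_square mult_ac)
        hence "c1 * S \<le> c2" using c2 S'p by simp
        thus ?thesis using c1 by (simp add: field_simps)
      qed
      have S'b: "S' \<le> c1 / c2"
      proof -
        have "c1 * c2 * S * S' \<le> c1\<^sup>2 * S" using hSS hP1 by linarith
        hence "(c2 * S') * (c1 * S) \<le> c1 * (c1 * S)" by (simp add: power2_eq_square mult_ac)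
        hence "c2 * S' \<le> c1" using c1 Sp by simp
        thus ?thesis using c2 by (simp add: field_simps)
      qed
      have Pb: "P\<^sup>2 \<le> c1 * c2"
      proof -
        have nn: "0 \<le> c1\<^sup>2 * S" using Sp by simp
        have "P\<^sup>2 * P\<^sup>2 \<le> (c1\<^sup>2 * S) * (c2\<^sup>2 * S')" using hP1 hP2 nn by (intro mult_mono) auto
        also have "\<dots> = c1 * c2 * (c1 * c2 * S * S')" by (simp add: power2_eq_square mult_ac)
        also have "\<dots> \<le> c1 * c2 * P\<^sup>2" using hSS c1 c2 by (intro mult_left_mono) auto
        finally have "P\<^sup>2 * P\<^sup>2 \<le> (c1 * c2) * P\<^sup>2" .
        moreover have "P\<^sup>2 > 0" using Pp by simp
        ultimately show ?thesis by (rule mult_right_le_imp_le)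
      qed
      have Psq: "P \<le> sqrt (c1 * c2)" using Pb Pp by (simp add: real_le_rsqrt)
      have Rd: "2 / R \<le> d"
      proof -
        have "2 / d < R" using RR0 unfolding R_def R0_def by simp
        thus ?thesis using d Rp by (simp add: field_simps)
      qed
      have V: "cmod (of_real m - p * K2) \<le> 2 / (R * d) + (2 + l2 / 2) * measure M2 {0<..d} + 2 * R\<^sup>2 / l2 * I2"
        unfolding m_def K2_def I2_def R_def by (rule V_split[OF M2 p d Rd[unfolded R_def] l2p])
      have v1: "2 / (R * d) \<le> m / 8"
      proof -
        have "16 / (d * m) < R" using RR0 unfolding R_def R0_def by simp
        thus ?thesis using d mp Rp by (simp add: field_simps)
      qed
      have v2: "(2 + l2 / 2) * measure M2 {0<..d} < m / 8"
      proof -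
        have "(2 + l2 / 2) * measure M2 {0<..d} < (2 + l2 / 2) * (m / (8 * (2 + l2 / 2)))"
          using dm l2p by (intro mult_strict_left_mono) auto
        also have "\<dots> = m / 8"
        proof -
          have gen: "\<And>a::real. a \<noteq> 0 \<Longrightarrow> a * (m / (8 * a)) = m / 8" by (simp add: field_simps)
          show ?thesis by (rule gen) (use l2p in simp)
        qed
        finally show ?thesis .
      qed
      have v3: "2 * R\<^sup>2 / l2 * I2 \<le> m / 4"
      proof -
        have "2 * R\<^sup>2 / l2 * I2 = 2 * S' / l2" unfolding S'_def by simp
        also have "\<dots> \<le> 2 * (c1 / c2) / l2" using S'b l2p by (intro divide_right_mono) auto
        also have "\<dots> = m / 4" unfolding l2_def using c1 c2 mp by (simp add: field_simps)
        finally show ?thesis .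
      qed
      have Vlt: "cmod (of_real m - p * K2) < m / 2" using V v1 v2 v3 by linarith
      have cpK2: "cmod (p * K2) = P / c2"
      proof -
        have "cmod (- z * p * q) = P" unfolding P_def R_def \<sigma>_def by (simp add: norm_mult)
        hence "c2 * cmod (p * K2) = P" unfolding W2 using c2 by (simp add: norm_mult)
        thus ?thesis using c2 by (simp add: field_simps)
      qed
      have "m - P / c2 \<le> cmod (of_real m - p * K2)"
      proof -
        have "cmod (of_real m :: complex) - cmod (p * K2) \<le> cmod (of_real m - p * K2)"
          by (rule norm_triangle_ineq2)
        thus ?thesis using mp cpK2 by simp
      qed
      hence "m / 2 < P / c2" using Vlt by linarith
      hence "c2 * (m / 2) < P" using c2 by (simp add: field_simps)
      hence PP0: "P > P0" unfolding P0_def by simp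
      have \<sigma>eq: "\<sigma> = P / (cmod z * R)" unfolding P_def using zp Rp by simp
      have \<sigma>lt: "\<sigma> < \<sigma>0"
      proof -
        have "sqrt (c1 * c2) / (\<eta> * \<sigma>0) < R" using RR0 unfolding R_def R0_def by simp
        hence "sqrt (c1 * c2) < R * (\<eta> * \<sigma>0)" using \<eta> \<sigma>0p by (simp add: field_simps)
        hence a: "sqrt (c1 * c2) / (\<eta> * R) < \<sigma>0" using \<eta> Rp by (simp add: field_simps)
        have "\<sigma> \<le> sqrt (c1 * c2) / (cmod z * R)" unfolding \<sigma>eq using Psq zp Rp
          by (intro divide_right_mono) auto
        also have "\<dots> \<le> sqrt (c1 * c2) / (\<eta> * R)" using z\<eta> \<eta> Rp c1 c2
          by (intro divide_left_mono mult_right_mono mult_pos_pos) auto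
        finally show ?thesis using a by linarith
      qed
      have \<sigma>T: "\<sigma> * T \<le> 1/2"
      proof -
        have "\<sigma> < 1 / (2 * T)" using \<sigma>lt unfolding \<sigma>0_def by simp
        thus ?thesis using T by (simp add: field_simps)
      qed
      have K: "\<sigma> * cmod K1 \<le> 2 * \<sigma> * T + l1 / 2 * measure M1 {T<..} + \<sigma>\<^sup>2 / (2 * l1) * I1"
        unfolding \<sigma>_def K1_def I1_def by (rule K_split[OF M1 q T \<sigma>T[unfolded \<sigma>_def] l1p])
      have k1: "2 * \<sigma> * T < P0 / (8 * c1)"
      proof -
        have "\<sigma> < P0 / (16 * c1 * T)" using \<sigma>lt unfolding \<sigma>0_def by simp
        thus ?thesis using T c1 by (simp add: field_simps)
      qed
      have k2: "l1 / 2 * measure M1 {T<..} < P0 / (8 * c1)"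
      proof -
        have "l1 / 2 * measure M1 {T<..} < l1 / 2 * (P0 / (4 * c1 * l1))"
          using Tm l1p by (intro mult_strict_left_mono) auto
        also have "\<dots> = P0 / (8 * c1)" using l1p c1 by (simp add: field_simps)
        finally show ?thesis .
      qed
      have k3: "\<sigma>\<^sup>2 / (2 * l1) * I1 \<le> P0 / (4 * c1)"
      proof -
        have "\<sigma>\<^sup>2 / (2 * l1) * I1 = S / (2 * l1)" unfolding S_def by simp
        also have "\<dots> \<le> (c2 / c1) / (2 * l1)" using Sb l1p by (intro divide_right_mono) auto
        also have "\<dots> = P0 / (4 * c1)" unfolding l1_def using c1 c2 P0p by (simp add: field_simps)
        finally show ?thesis .
      qed
      have "\<sigma> * cmod K1 = P / c1" unfolding P_def using czp c1 by (simp add: field_simps)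
      hence "P / c1 < P0 / (2 * c1)" using K k1 k2 k3 by simp
      hence "P < P0 / 2" using c1 by (simp add: field_simps)
      thus False using PP0 P0p by linarith
    qed
  qed
qed


theorem lemma3p2:
  fixes c :: real and \<nu> \<nu>' :: "real measure"
    and \<delta> \<delta>' :: "complex \<Rightarrow> complex"
  assumes c_pos: "c > 0"
    and \<nu>: "prob_on_Rplus \<nu>" and \<nu>_ne: "\<nu> \<noteq> return borel 0"
    and \<nu>': "prob_on_Rplus \<nu>'" and \<nu>'_ne: "\<nu>' \<noteq> return borel 0"
    and in_Cplus: "\<And>z. Im z > 0 \<Longrightarrow> Im (\<delta> z) > 0 \<and> Im (\<delta>' z) > 0"
    and eq1: "\<And>z. Im z > 0 \<Longrightarrow>
      \<delta> z = of_real c * (LINT t|\<nu>. of_real t / (- z * (1 + \<delta>' z * of_real t)))"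
    and eq2: "\<And>z. Im z > 0 \<Longrightarrow>
      \<delta>' z = (LINT t|\<nu>'. of_real t / (- z * (1 + \<delta> z * of_real t)))"
  shows "\<forall>R. R \<subseteq> {z. Im z > 0} \<longrightarrow> bounded R \<longrightarrow> (\<exists>\<eta>>0. \<forall>z\<in>R. \<bar>Re z\<bar> \<ge> \<eta>) \<longrightarrow>
           (\<exists>B. \<forall>z\<in>R. cmod (\<delta> z) \<le> B \<and> cmod (\<delta>' z) \<le> B)"
proof (intro allI impI)
  fix R :: "complex set"
  assume RC: "R \<subseteq> {z. Im z > 0}" and bR: "bounded R" and ex: "\<exists>\<eta>>0. \<forall>z\<in>R. \<bar>Re z\<bar> \<ge> \<eta>"
  obtain \<eta> where \<eta>: "\<eta> > 0" and h\<eta>: "\<And>z. z \<in> R \<Longrightarrow> \<bar>Re z\<bar> \<ge> \<eta>" using ex by blast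
  have m': "measure \<nu>' {0<..} > 0" by (rule pos_mass[OF \<nu>' \<nu>'_ne])
  have m: "measure \<nu> {0<..} > 0" by (rule pos_mass[OF \<nu> \<nu>_ne])
  have one: "(1::real) > 0" by simp
  obtain R1 where R1: "\<forall>z p q. Im z > 0 \<longrightarrow> \<eta> \<le> cmod z \<longrightarrow> Im p > 0 \<longrightarrow> Im q > 0 \<longrightarrow>
     p = of_real c * (LINT t|\<nu>. of_real t / (- z * (1 + q * of_real t))) \<longrightarrow>
     q = of_real 1 * (LINT t|\<nu>'. of_real t / (- z * (1 + p * of_real t))) \<longrightarrow> cmod p \<le> R1"
    using main_bound[OF c_pos one \<eta> \<nu> \<nu>' m'] by blast
  obtain R2 where R2: "\<forall>z p q. Im z > 0 \<longrightarrow> \<eta> \<le> cmod z \<longrightarrow> Im p > 0 \<longrightarrow> Im q > 0 \<longrightarrow>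
     p = of_real 1 * (LINT t|\<nu>'. of_real t / (- z * (1 + q * of_real t))) \<longrightarrow>
     q = of_real c * (LINT t|\<nu>. of_real t / (- z * (1 + p * of_real t))) \<longrightarrow> cmod p \<le> R2"
    using main_bound[OF one c_pos \<eta> \<nu>' \<nu> m] by blast
  show "\<exists>B. \<forall>z\<in>R. cmod (\<delta> z) \<le> B \<and> cmod (\<delta>' z) \<le> B"
  proof (intro exI ballI conjI)
    fix z assume zR: "z \<in> R"
    have z: "Im z > 0" using zR RC by auto
    have zc: "\<eta> \<le> cmod z" using h\<eta>[OF zR] abs_Re_le_cmod[of z] by linarith
    have pz: "Im (\<delta> z) > 0" and qz: "Im (\<delta>' z) > 0" using in_Cplus[OF z] by auto
    have e1: "\<delta> z = of_real c * (LINT t|\<nu>. of_real t / (- z * (1 + \<delta>' z * of_real t)))"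
      by (rule eq1[OF z])
    have e2: "\<delta>' z = of_real 1 * (LINT t|\<nu>'. of_real t / (- z * (1 + \<delta> z * of_real t)))"
      using eq2[OF z] by simp
    have "cmod (\<delta> z) \<le> R1" using R1 z zc pz qz e1 e2 by blast
    thus "cmod (\<delta> z) \<le> max R1 R2" by simp
    have "cmod (\<delta>' z) \<le> R2" using R2 z zc pz qz e1 e2 by blast
    thus "cmod (\<delta>' z) \<le> max R1 R2" by simp
  qed
qed

end
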